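(* Let $\Phi=\Phi_{\vec p}$ be a Weyl channel, written as $\Phi=\frac1N\sum_{\mu=0}^{N^2-1}\lambda_\mu|U_\mu\rangle\rangle\langle\langle U_\mu|$, where $\lambda_{mn}=\sum_{k,l}H_{mn,kl}\,p_{kl}$ (so $\lambda_0=1$). Then $\Phi\in\mathcal{A}_N^Q$ if and only if there exists a choice of logarithms $\ell_\nu$ (complex numbers with $e^{\ell_\nu}=\lambda_\nu$, $\nu=1,\dots,N^2-1$) such that for every $\mu=1,\dots,N^2-1$ the number $$t_\mu=\frac1{N^2}\sum_{\nu=1}^{N^2-1}H_{\mu\nu}\,\ell_\nu$$ is real and non-negative. In that case $\Phi=\exp\big(\sum_{\mu=1}^{N^2-1}t_\mu\mathcal{L}_\mu\big)$.
   Context: Let $N\ge2$, $\omega=e^{2\pi i/N}$, $X|j\rangle=|j\oplus1\rangle$ (addition mod $N$), $Z=\mathrm{diag}(1,\omega,\dots,\omega^{N-1})$, Weyl unitaries $U_{kl}=X^kZ^l$, $k,l\in\{0,\dots,N-1\}$, also indexed by $\mu=Nk+l\in\{0,\dots,N^2-1\}$. Maps on $N\times N$ matrices are identified with superoperators acting on $|A\rangle\rangle=\sum_{ij}A_{ij}|i\rangle|j\rangle$ ($\rho\mapsto K\rho K^\dagger$ corresponds to $K\otimes\overline{K}$). A Weyl channel is $\Phi_{\vec p}=\sum_\mu p_\mu U_\mu\otimes\overline{U}_\mu$ with $\vec p$ a probability vector of length $N^2$. $H$ is the $N^2\times N^2$ matrix with entries $H_{mn,kl}=\omega^{ml-kn}$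 (rows indexed by $\mu=Nm+n$, columns by $\nu=Nk+l$). $\mathcal{L}_\mu=U_\mu\otimes\overline{U}_\mu-\mathbb{I}_{N^2}$, and $\mathcal{A}_N^Q$ is the set of superoperators $\exp(\sum_{\mu=1}^{N^2-1}t_\mu\mathcal{L}_\mu)$ with all $t_\mu\ge0$. *)

theory Defs
  imports Complex_Main "Jordan_Normal_Form.Matrix"
begin

text \<open>Superoperators on N x N matrices are N^2 x N^2 matrices, where the basis vector
  |i>|j> of C^N tensor C^N has index N*i+j. Weyl indices mu = N*k + l.\<close>

definition omega :: "nat \<Rightarrow> complex" where
  "omega N = exp (2 * of_real pi * \<i> / of_nat N)"

definition shiftX :: "nat \<Rightarrow> complex mat" where
  "shiftX N = mat N N (\<lambda>(i, j). if i = (j + 1) mod N then 1 else 0)"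

definition clockZ :: "nat \<Rightarrow> complex mat" where
  "clockZ N = mat N N (\<lambda>(i, j). if i = j then omega N ^ i else 0)"

definition weylU :: "nat \<Rightarrow> nat \<Rightarrow> nat \<Rightarrow> complex mat" where
  "weylU N k l = (shiftX N ^\<^sub>m k) * (clockZ N ^\<^sub>m l)"

definition weylU_idx :: "nat \<Rightarrow> nat \<Rightarrow> complex mat" where
  "weylU_idx N \<mu> = weylU N (\<mu> div N) (\<mu> mod N)"

definition kron :: "nat \<Rightarrow> complex mat \<Rightarrow> complex mat \<Rightarrow> complex mat" where
  "kron N A B = mat (N*N) (N*N)
     (\<lambda>(r, c). A $$ (r div N, c div N) * B $$ (r mod N, c mod N))"

definition conj_mat :: "complex mat \<Rightarrow> complex mat" where
  "conj_mat A = mat (dim_row A) (dim_col A) (\<lambda>ij. cnj (A $$ ij))"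

text \<open>Superoperator of rho \<mapsto> K rho K^dagger: K \<otimes> conj K.\<close>
definition superop :: "nat \<Rightarrow> complex mat \<Rightarrow> complex mat" where
  "superop N K = kron N K (conj_mat K)"

definition prob_vec :: "nat \<Rightarrow> (nat \<Rightarrow> real) \<Rightarrow> bool" where
  "prob_vec N p \<longleftrightarrow> (\<forall>\<mu><N*N. p \<mu> \<ge> 0) \<and> (\<Sum>\<mu><N*N. p \<mu>) = 1"

definition weyl_channel :: "nat \<Rightarrow> (nat \<Rightarrow> real) \<Rightarrow> complex mat" where
  "weyl_channel N p = mat (N*N) (N*N)
     (\<lambda>rc. \<Sum>\<mu><N*N. of_real (p \<mu>) * superop N (weylU_idx N \<mu>) $$ rc)"

definition Hmat :: "nat \<Rightarrow> nat \<Rightarrow> nat \<Rightarrow> complex" where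
  "Hmat N \<mu> \<nu> = omega N powi
     (int (\<mu> div N) * int (\<nu> mod N) - int (\<nu> div N) * int (\<mu> mod N))"

definition weyl_eig :: "nat \<Rightarrow> (nat \<Rightarrow> real) \<Rightarrow> nat \<Rightarrow> complex" where
  "weyl_eig N p \<mu> = (\<Sum>\<nu><N*N. Hmat N \<mu> \<nu> * of_real (p \<nu>))"

definition genL :: "nat \<Rightarrow> nat \<Rightarrow> complex mat" where
  "genL N \<mu> = superop N (weylU_idx N \<mu>) - 1\<^sub>m (N*N)"

definition mexp :: "complex mat \<Rightarrow> complex mat" where
  "mexp A = mat (dim_row A) (dim_row A)
     (\<lambda>ij. \<Sum>k. (A ^\<^sub>m k) $$ ij / of_nat (fact k))"

definition gen_comb :: "nat \<Rightarrow> (nat \<Rightarrow> complex) \<Rightarrow> complex mat" where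
  "gen_comb N c = mat (N*N) (N*N) (\<lambda>rc. \<Sum>\<mu>\<in>{1..<N*N}. c \<mu> * genL N \<mu> $$ rc)"

definition AQ :: "nat \<Rightarrow> complex mat set" where
  "AQ N = {mexp (gen_comb N (\<lambda>\<mu>. of_real (t \<mu>))) | t :: nat \<Rightarrow> real.
             \<forall>\<mu>\<in>{1..<N*N}. t \<mu> \<ge> 0}"

definition t_of_log :: "nat \<Rightarrow> (nat \<Rightarrow> complex) \<Rightarrow> nat \<Rightarrow> complex" where
  "t_of_log N lg \<mu> = (\<Sum>\<nu>\<in>{1..<N*N}. Hmat N \<mu> \<nu> * lg \<nu>) / of_nat (N*N)"

end

theory Submission
  imports Defs "HOL-Analysis.Complex_Transcendental"
begin


definition w :: "nat \<Rightarrow> int \<Rightarrow> complex" where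
  "w N x = exp (2 * of_real pi * \<i> * of_int x / of_nat N)"

lemma w_add: "w N (x + y) = w N x * w N y"
  unfolding w_def by (simp add: exp_add[symmetric] algebra_simps add_divide_distrib)

lemma w_0[simp]: "w N 0 = 1" unfolding w_def by simp

lemma w_cnj: "cnj (w N x) = w N (- x)"
  unfolding w_def exp_cnj by simp

lemma w_eq_1_iff: assumes "N > 0" shows "w N x = 1 \<longleftrightarrow> int N dvd x"
proof -
  have "w N x = 1 \<longleftrightarrow> (\<exists>n::int. 2 * pi * x / N = of_int (2 * n) * pi)"
    unfolding w_def exp_eq_1 by simp
  also have "\<dots> \<longleftrightarrow> (\<exists>n::int. x = N * n)"
  proof -
    have "2 * pi * x / N = of_int (2 * n) * pi \<longleftrightarrow> x = N * n" for n :: int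
    proof -
      have "2 * pi * x / N = of_int (2 * n) * pi \<longleftrightarrow> 2 * pi * x = 2 * pi * (N * n)"
        using assms by (simp add: field_simps)
      also have "\<dots> \<longleftrightarrow> real_of_int x = real_of_int (N * n)" by simp
      also have "\<dots> \<longleftrightarrow> x = N * n" by linarith
      finally show ?thesis .
    qed
    then show ?thesis by simp
  qed
  finally show ?thesis by (auto simp: dvd_def)
qed

lemma w_mult_nat: "w N (int j * x) = w N x ^ j"
  unfolding w_def by (simp add: exp_of_nat_mult[symmetric] algebra_simps)

lemma w_period: assumes "N > 0" "int N dvd (x - y)" shows "w N x = w N y"
proof -
  have "w N (x - y) = 1" using assms w_eq_1_iff by blast
  have "w N x = w N ((x - y) + y)" by simp
  also have "\<dots> = w N (x - y) * w N y" by (rule w_add)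
  finally show ?thesis using \<open>w N (x - y) = 1\<close> by simp
qed

lemma w_sum: assumes "N > 0"
  shows "(\<Sum>j<N. w N (int j * x)) = (if int N dvd x then of_nat N else 0)"
proof (cases "int N dvd x")
  case True
  then have "w N x = 1" using assms w_eq_1_iff by blast
  then show ?thesis using True by (simp add: w_mult_nat)
next
  case False
  then have ne: "w N x \<noteq> 1" using assms w_eq_1_iff by blast
  have "w N x ^ N = 1" using w_mult_nat[of N N x] w_eq_1_iff[OF assms, of "int N * x"] by simp
  then show ?thesis using False ne by (simp add: w_mult_nat sum_gp_strict)
qed

lemma w_sum_small: assumes "N > 0" "a < N" "b < N"
  shows "(\<Sum>j<N. w N (int j * (int a - int b))) = (if a = b then of_nat N else 0)"
proof -
  have "int N dvd (int a - int b) \<longleftrightarrow> a = b"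
  proof
    assume "int N dvd (int a - int b)"
    then obtain q where q: "int a - int b = int N * q" by (auto simp: dvd_def)
    have "q = 0"
    proof (rule ccontr)
      assume "q \<noteq> 0"
      then have "1 \<le> \<bar>q\<bar>" by simp
      then have "int N * 1 \<le> int N * \<bar>q\<bar>" by (intro mult_left_mono) simp_all
      then have "\<bar>int N * q\<bar> \<ge> int N" by (simp add: abs_mult)
      then show False using q assms by linarith
    qed
    then show "a = b" using q by simp
  qed simp
  then show ?thesis using w_sum[OF assms(1)] by simp
qed

lemma collapse:
  assumes "N > 0"
  shows "(\<Sum>m<N. (if int N dvd (int m - X) then F m else 0)) = F (nat (X mod int N))"
proof -
  let ?m0 = "nat (X mod int N)"
  have m0: "?m0 < N" using assms by (simp add: nat_less_iff)
  have iff: "int N dvd (int m - X) \<longleftrightarrow> m = ?m0" if "m < N" for m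
  proof
    assume "int N dvd (int m - X)"
    then have "int m mod int N = X mod int N" by (metis mod_eq_dvd_iff)
    then show "m = ?m0" using that by simp
  next
    assume "m = ?m0"
    then have "int m = X mod int N" using assms by simp
    then show "int N dvd (int m - X)" by (simp add: mod_eq_dvd_iff[symmetric])
  qed
  have "(\<Sum>m<N. (if int N dvd (int m - X) then F m else 0)) = (\<Sum>m<N. (if m = ?m0 then F m else 0))"
    by (rule sum.cong) (auto simp: iff)
  also have "\<dots> = F ?m0" using m0 by (simp add: sum.delta)
  finally show ?thesis .
qed

lemma sum_split:
  fixes N :: nat and g :: "nat \<Rightarrow> nat \<Rightarrow> 'a::comm_monoid_add"
  shows
  "(\<Sum>t<N*N. g (t div N) (t mod N)) = (\<Sum>j<N. \<Sum>j'<N. g j j')"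
proof (cases "N = 0")
  case True then show ?thesis by simp
next
  case False
  have bij: "bij_betw (\<lambda>(j,j'). N*j+j') ({..<N} \<times> {..<N}) {..<N*N}"
  proof (rule bij_betw_imageI)
    show "inj_on (\<lambda>(j,j'). N*j+j') ({..<N} \<times> {..<N})"
    proof (rule inj_onI, clarsimp)
      fix a b c d assume "a < N" "b < N" "c < N" "d < N" "N*a+b = N*c+d"
      then have "(N*a+b) div N = (N*c+d) div N" "(N*a+b) mod N = (N*c+d) mod N" by simp_all
      then show "a = c \<and> b = d" using \<open>b<N\<close> \<open>d<N\<close> False by simp
    qed
    show "(\<lambda>(j,j'). N*j+j') ` ({..<N} \<times> {..<N}) = {..<N*N}"
    proof
      show "(\<lambda>(j,j'). N*j+j') ` ({..<N} \<times> {..<N}) \<subseteq> {..<N*N}"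
      proof clarsimp
        fix a b assume "a < N" "b < N"
        then have "N*a + b < N*a + N" by simp
        also have "\<dots> = N * Suc a" by simp
        also have "\<dots> \<le> N*N" using \<open>a<N\<close> by (intro mult_le_mono2) simp
        finally show "N*a+b < N*N" .
      qed
      show "{..<N*N} \<subseteq> (\<lambda>(j,j'). N*j+j') ` ({..<N} \<times> {..<N})"
      proof
        fix t assume "t \<in> {..<N*N}"
        then have "t div N < N" "t mod N < N" using False by (auto simp: less_mult_imp_div_less)
        moreover have "t = N*(t div N) + t mod N" by simp
        ultimately show "t \<in> (\<lambda>(j,j'). N*j+j') ` ({..<N} \<times> {..<N})"
          by (intro image_eqI[where x="(t div N, t mod N)"]) auto
      qed
    qed
  qed
  have "(\<Sum>t<N*N. g (t div N) (t mod N)) = (\<Sum>(j,j')\<in>{..<N} \<times> {..<N}. g ((N*j+j') div N) ((N*j+j') mod N))"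
    using sum.reindex_bij_betw[OF bij, of "\<lambda>t. g (t div N) (t mod N)"] by (simp add: case_prod_unfold)
  also have "\<dots> = (\<Sum>(j,j')\<in>{..<N} \<times> {..<N}. g j j')"
    using False by (intro sum.cong) auto
  also have "\<dots> = (\<Sum>j<N. \<Sum>j'<N. g j j')" by (simp add: sum.cartesian_product)
  finally show ?thesis .
qed



lemma small_dvd: assumes "a < N" "b < N"
  shows "int N dvd (int a - int b) \<longleftrightarrow> a = b"
proof
  assume "int N dvd (int a - int b)"
  then obtain q where q: "int a - int b = int N * q" by (auto simp: dvd_def)
  have "q = 0"
  proof (rule ccontr)
    assume "q \<noteq> 0"
    then have "1 \<le> \<bar>q\<bar>" by simp
    then have "int N * 1 \<le> int N * \<bar>q\<bar>" by (intro mult_left_mono) simp_all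
    then have "\<bar>int N * q\<bar> \<ge> int N" by (simp add: abs_mult)
    then show False using q assms by linarith
  qed
  then show "a = b" using q by simp
qed simp

lemma dvd_mod_shift: "int N dvd (X mod int N + Z) \<longleftrightarrow> int N dvd (X + Z)"
proof -
  have e: "X mod int N + Z = (X + Z) - int N * (X div int N)"
    by (simp add: minus_div_mult_eq_mod[symmetric] algebra_simps)
  show ?thesis unfolding e
    by (metis dvd_diff dvd_triv_left diff_add_cancel dvd_add)
qed

lemma dvd_mod_shift': "int N dvd (X mod int N - Y) \<longleftrightarrow> int N dvd (X - Y)"
  using dvd_mod_shift[of N X "- Y"] by simp

lemma w_period_mult: assumes "N > 0" "int N dvd (x - y)" shows "w N (x * z) = w N (y * z)"
  by (rule w_period[OF assms(1)]) (use assms(2) in \<open>simp add: left_diff_distrib[symmetric]\<close>)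

definition u :: "nat \<Rightarrow> nat \<Rightarrow> nat \<Rightarrow> nat \<Rightarrow> nat \<Rightarrow> complex" where
  "u N k l i j = (if int N dvd (int i - int j - int k) then w N (int j * int l) else 0)"

lemma sum_if_const: "(\<Sum>x\<in>A. if C then f x else 0) = (if C then (\<Sum>x\<in>A. f x) else 0)"
  by simp

lemma IP:
  assumes N: "N > 0" and "m < N" "n < N" "m' < N" "n' < N"
  shows "(\<Sum>j<N. \<Sum>j'<N. cnj (u N m n j j') * u N m' n' j j') = (if m = m' \<and> n = n' then of_nat N else 0)"
proof -
  have "(\<Sum>j<N. \<Sum>j'<N. cnj (u N m n j j') * u N m' n' j j') = (\<Sum>j'<N. \<Sum>j<N. cnj (u N m n j j') * u N m' n' j j')"
    by (rule sum.swap)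
  also have "\<dots> = (\<Sum>j'<N. \<Sum>j<N. if int N dvd (int j - (int j' + int m)) then
       (if int N dvd (int j - int j' - int m') then w N (- (int j' * int n)) * w N (int j' * int n') else 0) else 0)"
    by (intro sum.cong refl) (auto simp: u_def w_cnj algebra_simps)
  also have "\<dots> = (\<Sum>j'<N. if m = m' then w N (int j' * (int n' - int n)) else 0)"
  proof (intro sum.cong refl)
    fix j' assume "j' \<in> {..<N}"
    have c: "(\<Sum>j<N. if int N dvd (int j - (int j' + int m)) then
       (if int N dvd (int j - int j' - int m') then w N (- (int j' * int n)) * w N (int j' * int n') else 0) else 0)
      = (if int N dvd (int (nat ((int j' + int m) mod int N)) - int j' - int m') then w N (- (int j' * int n)) * w N (int j' * int n') else 0)"
      by (rule collapse[OF N])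
    have d: "int (nat ((int j' + int m) mod int N)) = (int j' + int m) mod int N" using N by simp
    have e1: "int N dvd ((int j' + int m) mod int N - int j' - int m') \<longleftrightarrow> int N dvd (int m - int m')"
      using dvd_mod_shift[of N "int j' + int m" "- int j' - int m'"] by (simp add: algebra_simps)
    have e2: "int N dvd (int m - int m') \<longleftrightarrow> m = m'" using small_dvd assms by blast
    have f: "w N (- (int j' * int n)) * w N (int j' * int n') = w N (int j' * (int n' - int n))"
      by (simp add: w_add[symmetric] algebra_simps)
    show "(\<Sum>j<N. if int N dvd (int j - (int j' + int m)) then
       (if int N dvd (int j - int j' - int m') then w N (- (int j' * int n)) * w N (int j' * int n') else 0) else 0)
      = (if m = m' then w N (int j' * (int n' - int n)) else 0)"
      unfolding c unfolding d e1 e2 f by simp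
  qed
  also have "\<dots> = (if m = m' \<and> n = n' then of_nat N else 0)"
    using w_sum_small[OF N assms(5) assms(3)] by (simp add: sum_if_const)
  finally show ?thesis .
qed

lemma inner_sum: assumes N: "N > 0"
  shows "(\<Sum>n<N. if P then (if Q then A * w N (int n * D) else 0) else 0)
     = (if P \<and> Q then A * (if int N dvd D then of_nat N else 0) else 0)"
  using w_sum[OF N, of D] by (cases P; cases Q) (simp_all add: sum_distrib_left[symmetric])

lemma u_alt: "u N k l i j = (if int N dvd (int k - (int i - int j)) then w N (int j * int l) else 0)"
proof -
  have "int N dvd (int k - (int i - int j)) \<longleftrightarrow> int N dvd (int i - int j - int k)"
    using dvd_minus_iff[of "int N" "int i - int j - int k"] by (simp add: algebra_simps)
  then show ?thesis unfolding u_def by simp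
qed

lemma COMP:
  assumes N: "N > 0" and "a < N" "a' < N" "b < N" "b' < N"
  shows "(\<Sum>m<N. \<Sum>n<N. u N m n a a' * cnj (u N m n b b')) = (if a = b \<and> a' = b' then of_nat N else 0)"
proof -
  have "(\<Sum>m<N. \<Sum>n<N. u N m n a a' * cnj (u N m n b b')) =
     (\<Sum>m<N. \<Sum>n<N. if int N dvd (int m - (int a - int a')) then
        (if int N dvd (int m - (int b - int b')) then 1 * w N (int n * (int a' - int b')) else 0) else 0)"
    by (intro sum.cong refl) (auto simp: u_alt w_cnj w_add[symmetric] algebra_simps)
  also have "\<dots> = (\<Sum>m<N. if int N dvd (int m - (int a - int a')) \<and> int N dvd (int m - (int b - int b'))
        then 1 * (if int N dvd (int a' - int b') then of_nat N else 0) else 0)"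
    by (intro sum.cong refl inner_sum N)
  also have "\<dots> = (\<Sum>m<N. if int N dvd (int m - (int a - int a')) then
        (if int N dvd (int m - (int b - int b')) \<and> a' = b' then of_nat N else 0) else 0)"
    using small_dvd[OF assms(3,5)] by (intro sum.cong refl) auto
  also have "\<dots> = (if int N dvd (int (nat ((int a - int a') mod int N)) - (int b - int b')) \<and> a' = b' then of_nat N else 0)"
    by (rule collapse[OF N])
  also have "int (nat ((int a - int a') mod int N)) = (int a - int a') mod int N" using N by simp
  also have "int N dvd ((int a - int a') mod int N - (int b - int b')) \<longleftrightarrow> int N dvd ((int a - int a') - (int b - int b'))"
    by (rule dvd_mod_shift')
  finally have *: "(\<Sum>m<N. \<Sum>n<N. u N m n a a' * cnj (u N m n b b')) =
     (if int N dvd (int a - int a' - (int b - int b')) \<and> a' = b' then of_nat N else 0)" .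
  show ?thesis
  proof (cases "a' = b'")
    case True
    then show ?thesis unfolding * using small_dvd[OF assms(2,4)] by simp
  next
    case False
    then show ?thesis unfolding * by simp
  qed
qed

lemma SE:
  assumes N: "N > 0" and "a < N" "a' < N" "b < N" "b' < N" "k < N" "l < N"
  shows "u N k l a b * cnj (u N k l a' b') =
    (\<Sum>m<N. \<Sum>n<N. w N (int m * int l - int k * int n) * (u N m n a a' * cnj (u N m n b b') / of_nat N))"
proof -
  let ?D = "int a' - int b' - int k"
  have "(\<Sum>m<N. \<Sum>n<N. w N (int m * int l - int k * int n) * (u N m n a a' * cnj (u N m n b b') / of_nat N)) =
     (\<Sum>m<N. \<Sum>n<N. if int N dvd (int m - (int a - int a')) then
        (if int N dvd (int m - (int b - int b')) then (w N (int m * int l) / of_nat N) * w N (int n * ?D) else 0) else 0)"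
    by (intro sum.cong refl) (auto simp: u_alt w_cnj w_add[symmetric] algebra_simps)
  also have "\<dots> = (\<Sum>m<N. if int N dvd (int m - (int a - int a')) \<and> int N dvd (int m - (int b - int b'))
        then (w N (int m * int l) / of_nat N) * (if int N dvd ?D then of_nat N else 0) else 0)"
    by (intro sum.cong refl inner_sum N)
  also have "\<dots> = (\<Sum>m<N. if int N dvd (int m - (int a - int a')) then
        (if int N dvd (int m - (int b - int b')) \<and> int N dvd ?D then w N (int m * int l) else 0) else 0)"
    using N by (intro sum.cong refl) auto
  also have "\<dots> = (if int N dvd (int (nat ((int a - int a') mod int N)) - (int b - int b')) \<and> int N dvd ?D
       then w N (int (nat ((int a - int a') mod int N)) * int l) else 0)"
    by (rule collapse[OF N])
  also have "int (nat ((int a - int a') mod int N)) = (int a - int a') mod int N" using N by simp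
  also have "int N dvd ((int a - int a') mod int N - (int b - int b')) \<longleftrightarrow> int N dvd ((int a - int a') - (int b - int b'))"
    by (rule dvd_mod_shift')
  also have "w N ((int a - int a') mod int N * int l) = w N ((int a - int a') * int l)"
    by (rule w_period_mult[OF N]) (simp add: mod_eq_dvd_iff[symmetric])
  finally have R: "(\<Sum>m<N. \<Sum>n<N. w N (int m * int l - int k * int n) * (u N m n a a' * cnj (u N m n b b') / of_nat N)) =
     (if int N dvd (int a - int a' - (int b - int b')) \<and> int N dvd ?D then w N ((int a - int a') * int l) else 0)" .
  have L: "u N k l a b * cnj (u N k l a' b') =
     (if int N dvd (int a - int b - int k) \<and> int N dvd ?D then w N ((int b - int b') * int l) else 0)"
    by (auto simp: u_def w_cnj w_add[symmetric] algebra_simps)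
  show ?thesis
  proof (cases "int N dvd ?D")
    case False then show ?thesis unfolding L R by simp
  next
    case True
    have e: "int a - int a' - (int b - int b') = (int a - int b - int k) - ?D" by simp
    have iff: "int N dvd (int a - int a' - (int b - int b')) \<longleftrightarrow> int N dvd (int a - int b - int k)"
      unfolding e using True by (metis dvd_diff diff_diff_cancel dvd_add diff_add_cancel)
    have ww: "int N dvd (int a - int b - int k) \<Longrightarrow> w N ((int a - int a') * int l) = w N ((int b - int b') * int l)"
      by (rule w_period_mult[OF N]) (use iff e in \<open>simp add: algebra_simps\<close>)
    show ?thesis unfolding L R using True iff ww by auto
  qed
qed



lemma mult_entry:
  assumes "A \<in> carrier_mat n n" "B \<in> carrier_mat n n" "i < n" "j < n"
  shows "(A * B) $$ (i,j) = (\<Sum>t<n. A $$ (i,t) * B $$ (t,j))"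
  using assms by (simp add: scalar_prod_def atLeast0LessThan)

lemma dvd_plus_mult: "int N dvd (Y + int N * q) \<longleftrightarrow> int N dvd Y"
  by (metis dvd_add_left_iff dvd_triv_left)

lemma omega_pow: "omega N ^ x = w N (int x)"
proof -
  have "omega N = w N 1" unfolding omega_def w_def by simp
  then show ?thesis using w_mult_nat[of N x 1] by simp
qed

lemma shiftX_carrier: "shiftX N \<in> carrier_mat N N" unfolding shiftX_def by simp
lemma clockZ_carrier: "clockZ N \<in> carrier_mat N N" unfolding clockZ_def by simp

lemma shiftX_entry: assumes N: "N > 0" and "t < N" "j < N"
  shows "shiftX N $$ (t,j) = (if int N dvd (int t - (int j + 1)) then 1 else 0)"
proof -
  have e: "int ((j+1) mod N) = (int j + 1) mod int N" by (simp add: of_nat_mod add.commute)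
  have "t = (j+1) mod N \<longleftrightarrow> int t = (int j + 1) mod int N" unfolding e[symmetric] by (rule of_nat_eq_iff[symmetric])
  also have "\<dots> \<longleftrightarrow> int t mod int N = (int j + 1) mod int N" using assms by simp
  also have "\<dots> \<longleftrightarrow> int N dvd (int t - (int j + 1))" by (rule mod_eq_dvd_iff)
  finally show ?thesis using assms unfolding shiftX_def by simp
qed

lemma shiftX_pow_entry: assumes N: "N > 0" and "i < N" "j < N"
  shows "(shiftX N ^\<^sub>m k) $$ (i,j) = (if int N dvd (int i - int j - int k) then 1 else 0)"
  using assms(2,3)
proof (induction k arbitrary: j)
  case 0
  then show ?case using small_dvd[of i N j] unfolding shiftX_def by simp
next
  case (Suc k)
  have "(shiftX N ^\<^sub>m Suc k) $$ (i,j) = (\<Sum>t<N. (shiftX N ^\<^sub>m k) $$ (i,t) * shiftX N $$ (t,j))"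
    using Suc.prems by (simp add: mult_entry[OF pow_carrier_mat[OF shiftX_carrier] shiftX_carrier])
  also have "\<dots> = (\<Sum>t<N. if int N dvd (int t - (int j + 1)) then (if int N dvd (int i - int t - int k) then 1 else 0) else 0)"
    using Suc by (intro sum.cong refl) (simp add: shiftX_entry[OF N])
  also have "\<dots> = (if int N dvd (int i - int (nat ((int j + 1) mod int N)) - int k) then 1 else 0)"
    by (rule collapse[OF N])
  also have "int (nat ((int j + 1) mod int N)) = (int j + 1) mod int N" using N by simp
  also have "int i - (int j + 1) mod int N - int k = (int i - int j - int (Suc k)) + int N * ((int j + 1) div int N)"
    by (simp add: minus_div_mult_eq_mod[symmetric] algebra_simps)
  also have "int N dvd \<dots> \<longleftrightarrow> int N dvd (int i - int j - int (Suc k))" by (rule dvd_plus_mult)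
  finally show ?case .
qed

lemma clockZ_pow_entry: assumes N: "N > 0" and "i < N" "j < N"
  shows "(clockZ N ^\<^sub>m l) $$ (i,j) = (if i = j then w N (int i * int l) else 0)"
  using assms(2,3)
proof (induction l arbitrary: j)
  case 0
  then show ?case by (simp add: clockZ_def)
next
  case (Suc l)
  have "(clockZ N ^\<^sub>m Suc l) $$ (i,j) = (\<Sum>t<N. (clockZ N ^\<^sub>m l) $$ (i,t) * clockZ N $$ (t,j))"
    using Suc.prems by (simp add: mult_entry[OF pow_carrier_mat[OF clockZ_carrier] clockZ_carrier])
  also have "\<dots> = (\<Sum>t<N. if t = i then (if i = j then w N (int i * int l) * w N (int i) else 0) else 0)"
    using Suc by (intro sum.cong refl) (auto simp: clockZ_def omega_pow)
  also have "\<dots> = (if i = j then w N (int i * int l) * w N (int i) else 0)"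
    using Suc.prems by (simp add: sum.delta)
  also have "w N (int i * int l) * w N (int i) = w N (int i * int (Suc l))"
    by (simp add: w_add[symmetric] algebra_simps)
  finally show ?case .
qed

lemma weylU_carrier: "weylU N k l \<in> carrier_mat N N"
  unfolding weylU_def by (rule mult_carrier_mat[OF pow_carrier_mat[OF shiftX_carrier] pow_carrier_mat[OF clockZ_carrier]])

lemma weylU_entry: assumes N: "N > 0" and "i < N" "j < N"
  shows "weylU N k l $$ (i,j) = u N k l i j"
proof -
  have "weylU N k l $$ (i,j) = (\<Sum>t<N. (shiftX N ^\<^sub>m k) $$ (i,t) * (clockZ N ^\<^sub>m l) $$ (t,j))"
    unfolding weylU_def using assms
    by (simp add: mult_entry[OF pow_carrier_mat[OF shiftX_carrier] pow_carrier_mat[OF clockZ_carrier]])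
  also have "\<dots> = (\<Sum>t<N. if t = j then (shiftX N ^\<^sub>m k) $$ (i,j) * w N (int j * int l) else 0)"
    using assms by (intro sum.cong refl) (auto simp: clockZ_pow_entry)
  also have "\<dots> = (shiftX N ^\<^sub>m k) $$ (i,j) * w N (int j * int l)"
    using assms by (simp add: sum.delta)
  also have "\<dots> = u N k l i j"
    using assms by (simp add: shiftX_pow_entry u_def)
  finally show ?thesis .
qed

lemma div_lt: fixes r N :: nat assumes "r < N * N" shows "r div N < N"
  using less_mult_imp_div_less[of r N N] assms by simp

lemma superop_entry:
  assumes N: "N > 0" and K: "K \<in> carrier_mat N N" and "r < N*N" "c < N*N"
  shows "superop N K $$ (r,c) = K $$ (r div N, c div N) * cnj (K $$ (r mod N, c mod N))"
  using assms div_lt[OF assms(3)] div_lt[OF assms(4)]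
  unfolding superop_def kron_def conj_mat_def by simp

lemma superop_carrier: "superop N K \<in> carrier_mat (N*N) (N*N)"
  unfolding superop_def kron_def by simp

lemma S_entry:
  assumes N: "N > 0" and "r < N*N" "c < N*N"
  shows "superop N (weylU_idx N \<mu>) $$ (r,c) =
    u N (\<mu> div N) (\<mu> mod N) (r div N) (c div N) * cnj (u N (\<mu> div N) (\<mu> mod N) (r mod N) (c mod N))"
  using assms div_lt[OF assms(2)] div_lt[OF assms(3)]
  by (simp add: superop_entry[OF N weylU_carrier] weylU_idx_def weylU_entry)



lemma omega_powi: "omega N powi x = w N x"
proof -
  have o: "omega N = w N 1" unfolding omega_def w_def by simp
  have inv: "inverse (w N 1) = w N (-1)"
    by (rule inverse_unique) (metis w_add add.right_inverse w_0)
  show ?thesis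
  proof (cases "x \<ge> 0")
    case True
    have "omega N powi x = w N 1 ^ nat x" unfolding o power_int_def using True by (simp only: if_True)
    also have "\<dots> = w N (int (nat x) * 1)" by (rule w_mult_nat[symmetric])
    also have "int (nat x) * 1 = x" using True by simp
    finally show ?thesis .
  next
    case False
    have "omega N powi x = w N (-1) ^ nat (-x)" unfolding o power_int_def inv using False by (simp only: if_False)
    also have "\<dots> = w N (int (nat (-x)) * (-1))" by (rule w_mult_nat[symmetric])
    also have "int (nat (-x)) * (-1) = x" using False by simp
    finally show ?thesis .
  qed
qed

lemma Hmat_w: "Hmat N \<mu> \<nu> = w N (int (\<mu> div N) * int (\<nu> mod N) - int (\<nu> div N) * int (\<mu> mod N))"
  unfolding Hmat_def omega_powi ..

definition Ef :: "nat \<Rightarrow> nat \<Rightarrow> nat \<Rightarrow> nat \<Rightarrow> complex" where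
  "Ef N \<nu> r c = u N (\<nu> div N) (\<nu> mod N) (r div N) (r mod N) *
      cnj (u N (\<nu> div N) (\<nu> mod N) (c div N) (c mod N)) / of_nat N"

definition Mm :: "nat \<Rightarrow> (nat \<Rightarrow> complex) \<Rightarrow> complex mat" where
  "Mm N cf = Matrix.mat (N*N) (N*N) (\<lambda>(r,c). \<Sum>\<nu><N*N. cf \<nu> * Ef N \<nu> r c)"

lemma mod_lt: fixes r N :: nat assumes "r < N * N" shows "r mod N < N"
  using assms by (cases "N = 0") auto

lemma divmod_eq: fixes a b N :: nat assumes "a < N*N" "b < N*N"
  shows "a = b \<longleftrightarrow> a div N = b div N \<and> a mod N = b mod N"
proof
  assume "a div N = b div N \<and> a mod N = b mod N"
  then have "a div N * N + a mod N = b div N * N + b mod N" by simp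
  then show "a = b" by simp
qed simp

lemma E_orth:
  assumes N: "N > 0" and "\<nu> < N*N" "\<rho> < N*N" "r < N*N" "c < N*N"
  shows "(\<Sum>t<N*N. Ef N \<nu> r t * Ef N \<rho> t c) = (if \<nu> = \<rho> then Ef N \<nu> r c else 0)"
proof -
  let ?A = "u N (\<nu> div N) (\<nu> mod N) (r div N) (r mod N)"
  let ?B = "cnj (u N (\<rho> div N) (\<rho> mod N) (c div N) (c mod N))"
  have "(\<Sum>t<N*N. Ef N \<nu> r t * Ef N \<rho> t c) =
     (\<Sum>t<N*N. (?A * ?B / (of_nat N * of_nat N)) * (cnj (u N (\<nu> div N) (\<nu> mod N) (t div N) (t mod N)) * u N (\<rho> div N) (\<rho> mod N) (t div N) (t mod N)))"
    unfolding Ef_def by (intro sum.cong refl) (simp add: field_simps)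
  also have "\<dots> = (?A * ?B / (of_nat N * of_nat N)) * (\<Sum>j<N. \<Sum>j'<N. cnj (u N (\<nu> div N) (\<nu> mod N) j j') * u N (\<rho> div N) (\<rho> mod N) j j')"
    unfolding sum_distrib_left[symmetric]
    using sum_split[where g = "\<lambda>j j'. cnj (u N (\<nu> div N) (\<nu> mod N) j j') * u N (\<rho> div N) (\<rho> mod N) j j'" and N = N]
    by simp
  also have "\<dots> = (?A * ?B / (of_nat N * of_nat N)) * (if \<nu> = \<rho> then of_nat N else 0)"
    using IP[OF N div_lt[OF assms(2)] mod_lt[OF assms(2)] div_lt[OF assms(3)] mod_lt[OF assms(3)]]
      divmod_eq[OF assms(2,3)] by simp
  also have "\<dots> = (if \<nu> = \<rho> then Ef N \<nu> r c else 0)"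
    using N unfolding Ef_def by auto
  finally show ?thesis .
qed

lemma E_comp:
  assumes N: "N > 0" and "r < N*N" "c < N*N"
  shows "(\<Sum>\<nu><N*N. Ef N \<nu> r c) = (if r = c then 1 else 0)"
proof -
  have "(\<Sum>\<nu><N*N. Ef N \<nu> r c) = (\<Sum>m<N. \<Sum>n<N. u N m n (r div N) (r mod N) * cnj (u N m n (c div N) (c mod N))) / of_nat N"
    unfolding Ef_def by (simp add: sum_divide_distrib[symmetric] sum_split[where g = "\<lambda>m n. u N m n (r div N) (r mod N) * cnj (u N m n (c div N) (c mod N))"])
  also have "\<dots> = (if r = c then 1 else 0)"
    using COMP[OF N div_lt[OF assms(2)] mod_lt[OF assms(2)] div_lt[OF assms(3)] mod_lt[OF assms(3)]]
      divmod_eq[OF assms(2,3)] N by auto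
  finally show ?thesis .
qed

lemma E_S:
  assumes N: "N > 0" and "\<mu> < N*N" "r < N*N" "c < N*N"
  shows "superop N (weylU_idx N \<mu>) $$ (r,c) = (\<Sum>\<nu><N*N. Hmat N \<nu> \<mu> * Ef N \<nu> r c)"
proof -
  have "(\<Sum>\<nu><N*N. Hmat N \<nu> \<mu> * Ef N \<nu> r c) =
    (\<Sum>m<N. \<Sum>n<N. w N (int m * int (\<mu> mod N) - int (\<mu> div N) * int n) *
        (u N m n (r div N) (r mod N) * cnj (u N m n (c div N) (c mod N)) / of_nat N))"
    unfolding Ef_def Hmat_w
    by (rule sum_split[where g = "\<lambda>m n. w N (int m * int (\<mu> mod N) - int (\<mu> div N) * int n) *
        (u N m n (r div N) (r mod N) * cnj (u N m n (c div N) (c mod N)) / of_nat N)"])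
  also have "\<dots> = u N (\<mu> div N) (\<mu> mod N) (r div N) (c div N) * cnj (u N (\<mu> div N) (\<mu> mod N) (r mod N) (c mod N))"
    by (rule SE[OF N div_lt[OF assms(3)] mod_lt[OF assms(3)] div_lt[OF assms(4)] mod_lt[OF assms(4)]
          div_lt[OF assms(2)] mod_lt[OF assms(2)], symmetric])
  also have "\<dots> = superop N (weylU_idx N \<mu>) $$ (r,c)"
    by (rule S_entry[OF N assms(3,4), symmetric])
  finally show ?thesis ..
qed



lemma Mm_carrier: "Mm N cf \<in> carrier_mat (N*N) (N*N)" unfolding Mm_def by simp

lemma Mm_entry: "r < N*N \<Longrightarrow> c < N*N \<Longrightarrow> Mm N cf $$ (r,c) = (\<Sum>\<nu><N*N. cf \<nu> * Ef N \<nu> r c)"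
  unfolding Mm_def by simp

lemma Mm_mult: assumes N: "N > 0"
  shows "Mm N cf * Mm N df = Mm N (\<lambda>\<nu>. cf \<nu> * df \<nu>)"
proof (rule eq_matI)
  show "dim_row (Mm N cf * Mm N df) = dim_row (Mm N (\<lambda>\<nu>. cf \<nu> * df \<nu>))" by (simp add: Mm_def)
  show "dim_col (Mm N cf * Mm N df) = dim_col (Mm N (\<lambda>\<nu>. cf \<nu> * df \<nu>))" by (simp add: Mm_def)
  fix r c assume "r < dim_row (Mm N (\<lambda>\<nu>. cf \<nu> * df \<nu>))" "c < dim_col (Mm N (\<lambda>\<nu>. cf \<nu> * df \<nu>))"
  then have rc: "r < N*N" "c < N*N" by (simp_all add: Mm_def)
  have "(Mm N cf * Mm N df) $$ (r,c) = (\<Sum>t<N*N. (\<Sum>\<nu><N*N. cf \<nu> * Ef N \<nu> r t) * (\<Sum>\<rho><N*N. df \<rho> * Ef N \<rho> t c))"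
    using rc by (simp add: mult_entry[OF Mm_carrier Mm_carrier] Mm_entry)
  also have "\<dots> = (\<Sum>t<N*N. \<Sum>\<nu><N*N. \<Sum>\<rho><N*N. (cf \<nu> * Ef N \<nu> r t) * (df \<rho> * Ef N \<rho> t c))"
    by (simp only: sum_product)
  also have "\<dots> = (\<Sum>t<N*N. \<Sum>\<nu><N*N. \<Sum>\<rho><N*N. (cf \<nu> * df \<rho>) * (Ef N \<nu> r t * Ef N \<rho> t c))"
    by (intro sum.cong refl) (simp only: mult_ac)
  also have "\<dots> = (\<Sum>\<nu><N*N. \<Sum>t<N*N. \<Sum>\<rho><N*N. (cf \<nu> * df \<rho>) * (Ef N \<nu> r t * Ef N \<rho> t c))"
    by (rule sum.swap)
  also have "\<dots> = (\<Sum>\<nu><N*N. \<Sum>\<rho><N*N. \<Sum>t<N*N. (cf \<nu> * df \<rho>) * (Ef N \<nu> r t * Ef N \<rho> t c))"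
    by (intro sum.cong refl sum.swap)
  also have "\<dots> = (\<Sum>\<nu><N*N. \<Sum>\<rho><N*N. (cf \<nu> * df \<rho>) * (if \<nu> = \<rho> then Ef N \<nu> r c else 0))"
    using rc by (intro sum.cong refl) (simp add: sum_distrib_left[symmetric] E_orth[OF N])
  also have "\<dots> = (\<Sum>\<nu><N*N. (cf \<nu> * df \<nu>) * Ef N \<nu> r c)"
    by (intro sum.cong refl) (simp add: if_distrib sum.delta cong: if_cong)
  also have "\<dots> = Mm N (\<lambda>\<nu>. cf \<nu> * df \<nu>) $$ (r,c)" using rc by (simp add: Mm_entry)
  finally show "(Mm N cf * Mm N df) $$ (r,c) = Mm N (\<lambda>\<nu>. cf \<nu> * df \<nu>) $$ (r,c)" .
qed

lemma Mm_one: assumes N: "N > 0" shows "1\<^sub>m (N*N) = Mm N (\<lambda>_. 1)"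
  by (rule eq_matI) (auto simp: Mm_def E_comp[OF N])

lemma Mm_pow: assumes N: "N > 0" shows "Mm N cf ^\<^sub>m k = Mm N (\<lambda>\<nu>. cf \<nu> ^ k)"
proof (induction k)
  case 0
  then show ?case using Mm_one[OF N] by (simp add: Mm_def)
next
  case (Suc k)
  then show ?case by (simp add: Mm_mult[OF N] mult.commute)
qed

lemma Mm_exp: assumes N: "N > 0" shows "mexp (Mm N cf) = Mm N (\<lambda>\<nu>. exp (cf \<nu>))"
proof (rule eq_matI)
  show "dim_row (mexp (Mm N cf)) = dim_row (Mm N (\<lambda>\<nu>. exp (cf \<nu>)))" by (simp add: Mm_def mexp_def)
  show "dim_col (mexp (Mm N cf)) = dim_col (Mm N (\<lambda>\<nu>. exp (cf \<nu>)))" by (simp add: Mm_def mexp_def)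
  fix r c assume "r < dim_row (Mm N (\<lambda>\<nu>. exp (cf \<nu>)))" "c < dim_col (Mm N (\<lambda>\<nu>. exp (cf \<nu>)))"
  then have rc: "r < N*N" "c < N*N" by (simp_all add: Mm_def)
  have s: "(\<lambda>k. \<Sum>\<nu><N*N. cf \<nu> ^ k / of_nat (fact k) * Ef N \<nu> r c) sums (\<Sum>\<nu><N*N. exp (cf \<nu>) * Ef N \<nu> r c)"
  proof (rule sums_sum)
    fix \<nu>
    have "(\<lambda>k. cf \<nu> ^ k /\<^sub>R fact k) sums exp (cf \<nu>)" by (rule exp_converges)
    then have "(\<lambda>k. cf \<nu> ^ k / of_nat (fact k)) sums exp (cf \<nu>)"
      by (simp add: scaleR_conv_of_real divide_inverse mult.commute)
    then show "(\<lambda>k. cf \<nu> ^ k / of_nat (fact k) * Ef N \<nu> r c) sums (exp (cf \<nu>) * Ef N \<nu> r c)"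
      by (rule sums_mult2)
  qed
  have "mexp (Mm N cf) $$ (r,c) = (\<Sum>k. (Mm N cf ^\<^sub>m k) $$ (r,c) / of_nat (fact k))"
    using rc by (simp add: mexp_def Mm_def)
  also have "\<dots> = (\<Sum>k. \<Sum>\<nu><N*N. cf \<nu> ^ k / of_nat (fact k) * Ef N \<nu> r c)"
    using rc by (simp add: Mm_pow[OF N] Mm_entry sum_divide_distrib)
  also have "\<dots> = (\<Sum>\<nu><N*N. exp (cf \<nu>) * Ef N \<nu> r c)" using s by (rule sums_unique[symmetric])
  also have "\<dots> = Mm N (\<lambda>\<nu>. exp (cf \<nu>)) $$ (r,c)" using rc by (simp add: Mm_entry)
  finally show "mexp (Mm N cf) $$ (r,c) = Mm N (\<lambda>\<nu>. exp (cf \<nu>)) $$ (r,c)" .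
qed

lemma Mm_inj: assumes N: "N > 0" and eq: "Mm N cf = Mm N df" and \<nu>: "\<nu> < N*N"
  shows "cf \<nu> = df \<nu>"
proof -
  let ?d = "\<lambda>\<rho>. if \<rho> = \<nu> then 1 else 0 :: complex"
  let ?r = "N * (\<nu> div N)"
  have r: "?r < N*N" using \<nu> times_div_less_eq_dividend[of N \<nu>] by linarith
  have rd: "?r div N = \<nu> div N" "?r mod N = 0" using N by simp_all
  have E: "Ef N \<nu> ?r ?r = 1 / of_nat N"
    unfolding Ef_def rd by (simp add: u_def)
  have val: "Mm N (\<lambda>\<rho>. f \<rho> * ?d \<rho>) $$ (?r, ?r) = f \<nu> / of_nat N" for f
  proof -
    have "Mm N (\<lambda>\<rho>. f \<rho> * ?d \<rho>) $$ (?r, ?r) = (\<Sum>\<rho><N*N. (if \<rho> = \<nu> then f \<nu> * Ef N \<nu> ?r ?r else 0))"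
      using r unfolding Mm_entry[OF r r] by (intro sum.cong refl) auto
    also have "\<dots> = f \<nu> / of_nat N" using \<nu> E by (simp add: sum.delta)
    finally show ?thesis .
  qed
  have "Mm N cf * Mm N ?d = Mm N df * Mm N ?d" using eq by simp
  then have "Mm N (\<lambda>\<rho>. cf \<rho> * ?d \<rho>) = Mm N (\<lambda>\<rho>. df \<rho> * ?d \<rho>)" by (simp add: Mm_mult[OF N])
  then have "cf \<nu> / of_nat N = df \<nu> / of_nat N" using val by metis
  then show ?thesis using N by simp
qed



lemma H0r[simp]: "Hmat N 0 \<rho> = 1" by (simp add: Hmat_w)
lemma H0c[simp]: "Hmat N \<nu> 0 = 1" by (simp add: Hmat_w)

lemma sum_prod_split:
  fixes f g :: "nat \<Rightarrow> complex"
  shows "(\<Sum>k<N. \<Sum>l<N. f k * g l) = (\<Sum>k<N. f k) * (\<Sum>l<N. g l)"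
  by (simp add: sum_product)

lemma H1:
  assumes N: "N > 0" and \<mu>: "\<mu> < N*N" and \<rho>: "\<rho> < N*N"
  shows "(\<Sum>\<nu><N*N. Hmat N \<mu> \<nu> * Hmat N \<nu> \<rho>) = (if \<mu> = \<rho> then of_nat (N*N) else 0)"
proof -
  let ?a = "\<mu> div N" and ?b = "\<mu> mod N" and ?c = "\<rho> div N" and ?d = "\<rho> mod N"
  have "(\<Sum>\<nu><N*N. Hmat N \<mu> \<nu> * Hmat N \<nu> \<rho>) =
    (\<Sum>k<N. \<Sum>l<N. w N (int ?a * int l - int k * int ?b) * w N (int k * int ?d - int ?c * int l))"
    unfolding Hmat_w
    by (rule sum_split[where g = "\<lambda>k l. w N (int ?a * int l - int k * int ?b) * w N (int k * int ?d - int ?c * int l)"])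
  also have "\<dots> = (\<Sum>k<N. \<Sum>l<N. w N (int k * (int ?d - int ?b)) * w N (int l * (int ?a - int ?c)))"
    by (intro sum.cong refl) (simp add: w_add[symmetric] algebra_simps)
  also have "\<dots> = (\<Sum>k<N. w N (int k * (int ?d - int ?b))) * (\<Sum>l<N. w N (int l * (int ?a - int ?c)))"
    by (rule sum_prod_split)
  also have "\<dots> = (if ?d = ?b then of_nat N else 0) * (if ?a = ?c then of_nat N else 0)"
    using w_sum_small[OF N mod_lt[OF \<rho>] mod_lt[OF \<mu>]] w_sum_small[OF N div_lt[OF \<mu>] div_lt[OF \<rho>]] by simp
  also have "\<dots> = (if \<mu> = \<rho> then of_nat (N*N) else 0)"
    using divmod_eq[OF \<mu> \<rho>] by auto
  finally show ?thesis .
qed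

lemma H2:
  assumes N: "N > 0" and \<rho>: "\<rho> < N*N"
  shows "(\<Sum>\<nu><N*N. Hmat N \<nu> \<rho>) = (if \<rho> = 0 then of_nat (N*N) else 0)"
proof -
  let ?c = "\<rho> div N" and ?d = "\<rho> mod N"
  have z: "0 < N*N" using N by simp
  have "(\<Sum>\<nu><N*N. Hmat N \<nu> \<rho>) = (\<Sum>k<N. \<Sum>l<N. w N (int k * int ?d - int ?c * int l))"
    unfolding Hmat_w by (rule sum_split[where g = "\<lambda>k l. w N (int k * int ?d - int ?c * int l)"])
  also have "\<dots> = (\<Sum>k<N. \<Sum>l<N. w N (int k * (int ?d - int 0)) * w N (int l * (int 0 - int ?c)))"
    by (intro sum.cong refl) (simp add: w_add[symmetric] algebra_simps)
  also have "\<dots> = (\<Sum>k<N. w N (int k * (int ?d - int 0))) * (\<Sum>l<N. w N (int l * (int 0 - int ?c)))"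
    by (rule sum_prod_split)
  also have "\<dots> = (if ?d = 0 then of_nat N else 0) * (if 0 = ?c then of_nat N else 0)"
    using w_sum_small[OF N mod_lt[OF \<rho>] N] w_sum_small[OF N N div_lt[OF \<rho>]] by simp
  also have "\<dots> = (if \<rho> = 0 then of_nat (N*N) else 0)"
    using divmod_eq[OF \<rho> z] by auto
  finally show ?thesis .
qed

lemma H3:
  assumes N: "N > 0" and \<mu>: "\<mu> < N*N"
  shows "(\<Sum>\<nu><N*N. Hmat N \<mu> \<nu>) = (if \<mu> = 0 then of_nat (N*N) else 0)"
proof -
  let ?a = "\<mu> div N" and ?b = "\<mu> mod N"
  have z: "0 < N*N" using N by simp
  have "(\<Sum>\<nu><N*N. Hmat N \<mu> \<nu>) = (\<Sum>k<N. \<Sum>l<N. w N (int ?a * int l - int k * int ?b))"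
    unfolding Hmat_w by (rule sum_split[where g = "\<lambda>k l. w N (int ?a * int l - int k * int ?b)"])
  also have "\<dots> = (\<Sum>k<N. \<Sum>l<N. w N (int k * (int 0 - int ?b)) * w N (int l * (int ?a - int 0)))"
    by (intro sum.cong refl) (simp add: w_add[symmetric] algebra_simps)
  also have "\<dots> = (\<Sum>k<N. w N (int k * (int 0 - int ?b))) * (\<Sum>l<N. w N (int l * (int ?a - int 0)))"
    by (rule sum_prod_split)
  also have "\<dots> = (if 0 = ?b then of_nat N else 0) * (if ?a = 0 then of_nat N else 0)"
    using w_sum_small[OF N N mod_lt[OF \<mu>]] w_sum_small[OF N div_lt[OF \<mu>] N] by simp
  also have "\<dots> = (if \<mu> = 0 then of_nat (N*N) else 0)"
    using divmod_eq[OF \<mu> z] by auto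
  finally show ?thesis .
qed

lemma split0: fixes n :: nat assumes "0 < n" shows "(\<Sum>i<n. f i) = f 0 + (\<Sum>i\<in>{1..<n}. f i)"
proof -
  have "{..<n} = insert 0 {1..<n}" using assms by auto
  then show ?thesis by simp
qed

definition Lg :: "nat \<Rightarrow> (nat \<Rightarrow> complex) \<Rightarrow> nat \<Rightarrow> complex" where
  "Lg N t \<nu> = (\<Sum>\<mu>\<in>{1..<N*N}. t \<mu> * (Hmat N \<nu> \<mu> - 1))"

lemma Lg0[simp]: "Lg N t 0 = 0" unfolding Lg_def by simp

lemma F1:
  assumes N: "N > 0" and \<mu>: "\<mu> \<in> {1..<N*N}"
  shows "t_of_log N (Lg N t) \<mu> = t \<mu>"
proof -
  have z: "0 < N*N" using N by simp
  have \<mu>': "\<mu> < N*N" "\<mu> \<noteq> 0" using \<mu> by auto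
  have "(\<Sum>\<nu>\<in>{1..<N*N}. Hmat N \<mu> \<nu> * Lg N t \<nu>) = (\<Sum>\<nu><N*N. Hmat N \<mu> \<nu> * Lg N t \<nu>)"
    using split0[OF z, of "\<lambda>\<nu>. Hmat N \<mu> \<nu> * Lg N t \<nu>"] by simp
  also have "\<dots> = (\<Sum>\<nu><N*N. \<Sum>\<rho>\<in>{1..<N*N}. t \<rho> * (Hmat N \<mu> \<nu> * Hmat N \<nu> \<rho> - Hmat N \<mu> \<nu>))"
    unfolding Lg_def by (intro sum.cong refl) (simp add: sum_distrib_left algebra_simps)
  also have "\<dots> = (\<Sum>\<rho>\<in>{1..<N*N}. \<Sum>\<nu><N*N. t \<rho> * (Hmat N \<mu> \<nu> * Hmat N \<nu> \<rho> - Hmat N \<mu> \<nu>))"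
    by (rule sum.swap)
  also have "\<dots> = (\<Sum>\<rho>\<in>{1..<N*N}. t \<rho> * ((\<Sum>\<nu><N*N. Hmat N \<mu> \<nu> * Hmat N \<nu> \<rho>) - (\<Sum>\<nu><N*N. Hmat N \<mu> \<nu>)))"
    by (intro sum.cong refl) (simp only: right_diff_distrib sum_subtractf sum_distrib_left)
  also have "\<dots> = (\<Sum>\<rho>\<in>{1..<N*N}. if \<rho> = \<mu> then t \<mu> * of_nat (N*N) else 0)"
    using \<mu>' by (intro sum.cong refl) (auto simp: H1[OF N] H3[OF N])
  also have "\<dots> = t \<mu> * of_nat (N*N)" using \<mu> by (simp add: sum.delta')
  finally show ?thesis unfolding t_of_log_def using N by simp
qed

lemma F2:
  assumes N: "N > 0" and \<nu>: "\<nu> \<in> {1..<N*N}"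
  shows "Lg N (t_of_log N l) \<nu> = l \<nu>"
proof -
  have z: "0 < N*N" using N by simp
  have \<nu>': "\<nu> < N*N" "\<nu> \<noteq> 0" using \<nu> by auto
  have "Lg N (t_of_log N l) \<nu> * of_nat (N*N) = (\<Sum>\<mu>\<in>{1..<N*N}. t_of_log N l \<mu> * (Hmat N \<nu> \<mu> - 1) * of_nat (N*N))"
    unfolding Lg_def by (rule sum_distrib_right)
  also have "\<dots> = (\<Sum>\<mu>\<in>{1..<N*N}. (\<Sum>\<rho>\<in>{1..<N*N}. Hmat N \<mu> \<rho> * l \<rho>) * (Hmat N \<nu> \<mu> - 1))"
  proof (intro sum.cong refl)
    fix \<mu>
    have T: "t_of_log N l \<mu> * of_nat (N*N) = (\<Sum>\<rho>\<in>{1..<N*N}. Hmat N \<mu> \<rho> * l \<rho>)"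
      using N by (simp add: t_of_log_def)
    show "t_of_log N l \<mu> * (Hmat N \<nu> \<mu> - 1) * of_nat (N*N) = (\<Sum>\<rho>\<in>{1..<N*N}. Hmat N \<mu> \<rho> * l \<rho>) * (Hmat N \<nu> \<mu> - 1)"
      unfolding T[symmetric] by (simp only: mult_ac)
  qed
  also have "\<dots> = (\<Sum>\<mu><N*N. (\<Sum>\<rho>\<in>{1..<N*N}. Hmat N \<mu> \<rho> * l \<rho>) * (Hmat N \<nu> \<mu> - 1))"
    using split0[OF z, of "\<lambda>\<mu>. (\<Sum>\<rho>\<in>{1..<N*N}. Hmat N \<mu> \<rho> * l \<rho>) * (Hmat N \<nu> \<mu> - 1)"] by simp
  also have "\<dots> = (\<Sum>\<mu><N*N. \<Sum>\<rho>\<in>{1..<N*N}. l \<rho> * (Hmat N \<nu> \<mu> * Hmat N \<mu> \<rho> - Hmat N \<mu> \<rho>))"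
    by (intro sum.cong refl) (subst sum_distrib_right, rule sum.cong, rule refl, simp add: algebra_simps)
  also have "\<dots> = (\<Sum>\<rho>\<in>{1..<N*N}. \<Sum>\<mu><N*N. l \<rho> * (Hmat N \<nu> \<mu> * Hmat N \<mu> \<rho> - Hmat N \<mu> \<rho>))"
    by (rule sum.swap)
  also have "\<dots> = (\<Sum>\<rho>\<in>{1..<N*N}. l \<rho> * ((\<Sum>\<mu><N*N. Hmat N \<nu> \<mu> * Hmat N \<mu> \<rho>) - (\<Sum>\<mu><N*N. Hmat N \<mu> \<rho>)))"
    by (intro sum.cong refl) (simp only: right_diff_distrib sum_subtractf sum_distrib_left)
  also have "\<dots> = (\<Sum>\<rho>\<in>{1..<N*N}. if \<rho> = \<nu> then l \<nu> * of_nat (N*N) else 0)"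
    using \<nu>' by (intro sum.cong refl) (auto simp: H1[OF N] H2[OF N])
  also have "\<dots> = l \<nu> * of_nat (N*N)" using \<nu> by (simp add: sum.delta')
  finally show ?thesis using N by simp
qed



lemma Mm_cong: "(\<And>\<nu>. \<nu> < N*N \<Longrightarrow> cf \<nu> = df \<nu>) \<Longrightarrow> Mm N cf = Mm N df"
  unfolding Mm_def by (intro cong_mat refl) (auto intro!: sum.cong)

lemma channel_Mm: assumes N: "N > 0" shows "weyl_channel N p = Mm N (weyl_eig N p)"
proof (rule eq_matI)
  show "dim_row (weyl_channel N p) = dim_row (Mm N (weyl_eig N p))" by (simp add: Mm_def weyl_channel_def)
  show "dim_col (weyl_channel N p) = dim_col (Mm N (weyl_eig N p))" by (simp add: Mm_def weyl_channel_def)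
  fix r c assume "r < dim_row (Mm N (weyl_eig N p))" "c < dim_col (Mm N (weyl_eig N p))"
  then have rc: "r < N*N" "c < N*N" by (simp_all add: Mm_def)
  have "weyl_channel N p $$ (r,c) = (\<Sum>\<mu><N*N. of_real (p \<mu>) * (\<Sum>\<nu><N*N. Hmat N \<nu> \<mu> * Ef N \<nu> r c))"
    unfolding weyl_channel_def using rc by (simp add: E_S[OF N])
  also have "\<dots> = (\<Sum>\<mu><N*N. \<Sum>\<nu><N*N. (Hmat N \<nu> \<mu> * of_real (p \<mu>)) * Ef N \<nu> r c)"
    by (intro sum.cong refl) (simp add: sum_distrib_left mult_ac)
  also have "\<dots> = (\<Sum>\<nu><N*N. \<Sum>\<mu><N*N. (Hmat N \<nu> \<mu> * of_real (p \<mu>)) * Ef N \<nu> r c)"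
    by (rule sum.swap)
  also have "\<dots> = (\<Sum>\<nu><N*N. weyl_eig N p \<nu> * Ef N \<nu> r c)"
    unfolding weyl_eig_def by (intro sum.cong refl) (simp add: sum_distrib_right)
  also have "\<dots> = Mm N (weyl_eig N p) $$ (r,c)" using rc by (simp add: Mm_entry)
  finally show "weyl_channel N p $$ (r,c) = Mm N (weyl_eig N p) $$ (r,c)" .
qed

lemma gen_Mm: assumes N: "N > 0" shows "gen_comb N t = Mm N (Lg N t)"
proof (rule eq_matI)
  show "dim_row (gen_comb N t) = dim_row (Mm N (Lg N t))" by (simp add: Mm_def gen_comb_def)
  show "dim_col (gen_comb N t) = dim_col (Mm N (Lg N t))" by (simp add: Mm_def gen_comb_def)
  fix r c assume "r < dim_row (Mm N (Lg N t))" "c < dim_col (Mm N (Lg N t))"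
  then have rc: "r < N*N" "c < N*N" by (simp_all add: Mm_def)
  have gl: "genL N \<mu> $$ (r,c) = (\<Sum>\<nu><N*N. (Hmat N \<nu> \<mu> - 1) * Ef N \<nu> r c)" if "\<mu> < N*N" for \<mu>
  proof -
    have "genL N \<mu> $$ (r,c) = superop N (weylU_idx N \<mu>) $$ (r,c) - 1\<^sub>m (N*N) $$ (r,c)"
      unfolding genL_def using rc by simp
    also have "\<dots> = (\<Sum>\<nu><N*N. Hmat N \<nu> \<mu> * Ef N \<nu> r c) - (\<Sum>\<nu><N*N. Ef N \<nu> r c)"
      using rc that by (simp add: E_S[OF N] E_comp[OF N])
    also have "\<dots> = (\<Sum>\<nu><N*N. (Hmat N \<nu> \<mu> - 1) * Ef N \<nu> r c)"
      by (simp add: sum_subtractf[symmetric] left_diff_distrib)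
    finally show ?thesis .
  qed
  have "gen_comb N t $$ (r,c) = (\<Sum>\<mu>\<in>{1..<N*N}. t \<mu> * (\<Sum>\<nu><N*N. (Hmat N \<nu> \<mu> - 1) * Ef N \<nu> r c))"
    unfolding gen_comb_def using rc gl by (auto intro!: sum.cong)
  also have "\<dots> = (\<Sum>\<mu>\<in>{1..<N*N}. \<Sum>\<nu><N*N. (t \<mu> * (Hmat N \<nu> \<mu> - 1)) * Ef N \<nu> r c)"
    by (intro sum.cong refl) (simp add: sum_distrib_left mult_ac)
  also have "\<dots> = (\<Sum>\<nu><N*N. \<Sum>\<mu>\<in>{1..<N*N}. (t \<mu> * (Hmat N \<nu> \<mu> - 1)) * Ef N \<nu> r c)"
    by (rule sum.swap)
  also have "\<dots> = (\<Sum>\<nu><N*N. Lg N t \<nu> * Ef N \<nu> r c)"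
    unfolding Lg_def by (intro sum.cong refl) (simp add: sum_distrib_right)
  also have "\<dots> = Mm N (Lg N t) $$ (r,c)" using rc by (simp add: Mm_entry)
  finally show "gen_comb N t $$ (r,c) = Mm N (Lg N t) $$ (r,c)" .
qed

lemma gen_comb_cong: "(\<And>\<mu>. \<mu> \<in> {1..<N*N} \<Longrightarrow> a \<mu> = b \<mu>) \<Longrightarrow> gen_comb N a = gen_comb N b"
  unfolding gen_comb_def by (intro cong_mat refl) (auto intro!: sum.cong)

lemma eig0: assumes "prob_vec N p" shows "weyl_eig N p 0 = 1"
proof -
  have "weyl_eig N p 0 = of_real (\<Sum>\<nu><N*N. p \<nu>)" unfolding weyl_eig_def by simp
  then show ?thesis using assms unfolding prob_vec_def by simp
qed

theorem theorem1:
  fixes N :: nat and p :: "nat \<Rightarrow> real"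
  assumes "N \<ge> 2" and "prob_vec N p"
  shows "(weyl_channel N p \<in> AQ N \<longleftrightarrow>
           (\<exists>lg :: nat \<Rightarrow> complex.
              (\<forall>\<nu>\<in>{1..<N*N}. exp (lg \<nu>) = weyl_eig N p \<nu>) \<and>
              (\<forall>\<mu>\<in>{1..<N*N}. t_of_log N lg \<mu> \<in> \<real> \<and> Re (t_of_log N lg \<mu>) \<ge> 0)))
       \<and> (\<forall>lg :: nat \<Rightarrow> complex.
              (\<forall>\<nu>\<in>{1..<N*N}. exp (lg \<nu>) = weyl_eig N p \<nu>) \<and>
              (\<forall>\<mu>\<in>{1..<N*N}. t_of_log N lg \<mu> \<in> \<real> \<and> Re (t_of_log N lg \<mu>) \<ge> 0)
            \<longrightarrow> weyl_channel N p = mexp (gen_comb N (t_of_log N lg)))"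
proof -
  have N: "N > 0" using assms(1) by simp
  have P2: "weyl_channel N p = mexp (gen_comb N (t_of_log N lg))"
    if lg: "\<forall>\<nu>\<in>{1..<N*N}. exp (lg \<nu>) = weyl_eig N p \<nu>" for lg
  proof -
    have "mexp (gen_comb N (t_of_log N lg)) = Mm N (\<lambda>\<nu>. exp (Lg N (t_of_log N lg) \<nu>))"
      by (simp add: gen_Mm[OF N] Mm_exp[OF N])
    also have "\<dots> = Mm N (weyl_eig N p)"
    proof (rule Mm_cong)
      fix \<nu> assume \<nu>: "\<nu> < N*N"
      show "exp (Lg N (t_of_log N lg) \<nu>) = weyl_eig N p \<nu>"
      proof (cases "\<nu> = 0")
        case True then show ?thesis using eig0[OF assms(2)] by simp
      next
        case False
        then have "\<nu> \<in> {1..<N*N}" using \<nu> by auto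
        then show ?thesis using F2[OF N] lg by simp
      qed
    qed
    finally show ?thesis unfolding channel_Mm[OF N] by (rule sym)
  qed
  have P1a: "\<exists>lg :: nat \<Rightarrow> complex.
              (\<forall>\<nu>\<in>{1..<N*N}. exp (lg \<nu>) = weyl_eig N p \<nu>) \<and>
              (\<forall>\<mu>\<in>{1..<N*N}. t_of_log N lg \<mu> \<in> \<real> \<and> Re (t_of_log N lg \<mu>) \<ge> 0)"
    if inAQ: "weyl_channel N p \<in> AQ N"
  proof -
    obtain t :: "nat \<Rightarrow> real" where t: "\<forall>\<mu>\<in>{1..<N*N}. t \<mu> \<ge> 0"
      and eq: "weyl_channel N p = mexp (gen_comb N (\<lambda>\<mu>. of_real (t \<mu>)))"
      using inAQ unfolding AQ_def by blast
    let ?T = "\<lambda>\<mu>. complex_of_real (t \<mu>)"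
    have "Mm N (weyl_eig N p) = Mm N (\<lambda>\<nu>. exp (Lg N ?T \<nu>))"
      using eq unfolding channel_Mm[OF N] gen_Mm[OF N] Mm_exp[OF N] .
    then have e: "weyl_eig N p \<nu> = exp (Lg N ?T \<nu>)" if "\<nu> < N*N" for \<nu>
      using Mm_inj[OF N _ that] by blast
    show ?thesis
    proof (intro exI[of _ "Lg N ?T"] conjI ballI)
      fix \<nu> assume "\<nu> \<in> {1..<N*N}"
      then show "exp (Lg N ?T \<nu>) = weyl_eig N p \<nu>" using e by simp
    next
      fix \<mu> assume "\<mu> \<in> {1..<N*N}"
      then show "t_of_log N (Lg N ?T) \<mu> \<in> \<real>" by (simp add: F1[OF N])
    next
      fix \<mu> assume "\<mu> \<in> {1..<N*N}"
      then show "Re (t_of_log N (Lg N ?T) \<mu>) \<ge> 0" using t by (simp add: F1[OF N])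
    qed
  qed
  have P1b: "weyl_channel N p \<in> AQ N"
    if ex: "\<exists>lg :: nat \<Rightarrow> complex.
              (\<forall>\<nu>\<in>{1..<N*N}. exp (lg \<nu>) = weyl_eig N p \<nu>) \<and>
              (\<forall>\<mu>\<in>{1..<N*N}. t_of_log N lg \<mu> \<in> \<real> \<and> Re (t_of_log N lg \<mu>) \<ge> 0)"
  proof -
    obtain lg where lg1: "\<forall>\<nu>\<in>{1..<N*N}. exp (lg \<nu>) = weyl_eig N p \<nu>"
      and lg2: "\<forall>\<mu>\<in>{1..<N*N}. t_of_log N lg \<mu> \<in> \<real> \<and> Re (t_of_log N lg \<mu>) \<ge> 0"
      using ex by blast
    let ?t = "\<lambda>\<mu>. Re (t_of_log N lg \<mu>)"
    have "gen_comb N (\<lambda>\<mu>. of_real (?t \<mu>)) = gen_comb N (t_of_log N lg)"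
      by (rule gen_comb_cong) (use lg2 in simp)
    then have "weyl_channel N p = mexp (gen_comb N (\<lambda>\<mu>. of_real (?t \<mu>)))"
      using P2[OF lg1] by metis
    moreover have "\<forall>\<mu>\<in>{1..<N*N}. ?t \<mu> \<ge> 0" using lg2 by blast
    ultimately show ?thesis unfolding AQ_def by (intro CollectI exI[of _ ?t] conjI) auto
  qed
  show ?thesis using P1a P1b P2 by blast
qed

end
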